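(* Let $0<q<1$, $\Re\eta>-1$, $\lambda\ge1$, and let $\phi(z)=1+\sum_{n\ge1}E_nz^n$ be analytic in $\Delta$ with $\Re\phi>0$, $\phi(0)=1$, $E_1>0$. Put $$\Psi=2(\lambda\widetilde{[3]}_q-1)\widetilde{[3]}_qL_3+\lambda(\lambda-1)\widetilde{[2]}_q^{\,4}L_2^2,\qquad \Upsilon=2(\lambda\widetilde{[3]}_q-1)\widetilde{[3]}_qE_1^2L_3+\lambda\big[(\lambda-1)E_1^2+2\lambda(E_1-E_2)\big]\widetilde{[2]}_q^{\,4}L_2^2,$$ assumed nonzero. If $f(z)=z+\sum_{n\ge2}a_nz^n$ belongs to $\widetilde{\mathcal{C}_{\Sigma}}{}^{\eta}_q(\lambda;\phi)$, then $$|a_2|\le\min\left\{\frac{E_1}{\lambda|L_2|\widetilde{[2]}_q^{\,2}},\ \sqrt{\frac{2(|E_2-E_1|+E_1)}{|\Psi|}},\ \frac{E_1\sqrt{2E_1}}{\sqrt{|\Upsilon|}}\right\},\qquad |a_3|\le\frac{E_1}{(\lambda\widetilde{[3]}_q-1)\widetilde{[3]}_q|L_3|}+\min\left\{\frac{E_1^2}{\lambda^2\widetilde{[2]}_q^{\,4}|L_2|^2},\ \frac{2(|E_2-E_1|+E_1)}{|\Psi|}\right\}.$$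
   Context: $\Delta=\{z\in\mathbb{C}:|z|<1\}$. $\Sigma$ denotes the class of analytic $f(z)=z+\sum_{n\ge2}a_nz^n$ on $\Delta$ that are univalent and whose inverse $g=f^{-1}$ extends univalently to $\Delta$. For $0<q<1$, $\chi\in\mathbb C$: $\widetilde{[\chi]}_q=\frac{q^{\chi}-q^{-\chi}}{q-q^{-1}}$. Symmetric $q$-derivative: $\widetilde{\mathcal D}_qF(z)=\frac{F(qz)-F(q^{-1}z)}{(q-q^{-1})z}$ ($z\ne0$), $\widetilde{\mathcal D}_qF(0)=F'(0)$. For $\Re\eta>-1$, $\mathcal J^{\eta}_qf(z)=z+\sum_{n\ge2}L_na_nz^n$ with $L_n=\widetilde{[1+\eta]}_q/\widetilde{[n+\eta]}_q$. Subordination $F\prec G$: $F=G\circ h$, $h$ analytic, $h(0)=0$, $|h|<1$. Principal branches for powers. The class $\widetilde{\mathcal{C}_{\Sigma}}{}^{\eta}_q(\lambda;\phi)$ (the case $\mu=0$ of the general class) consists of $f\in\Sigma$, $g=f^{-1}$, with $F=\mathcal J^\eta_qf$, $G=\mathcal J^\eta_qg$ satisfying $$\frac{2\{\widetilde{\mathcal D}_q[z\widetilde{\mathcal D}_qF(z)]\}^{\lambda}}{\widetilde{\mathcal D}_q[F(z)-F(-z)]}\prec\phi(z),\qquad \frac{2\{\widetilde{\mathcal D}_q[w\widetilde{\mathcal D}_qG(w)]\}^{\lambda}}{\widetilde{\mathcal D}_q[G(w)-G(-w)]}\prec\phi(w)\qquad(z,w\in\Delta).$$ *)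

theory Defs
  imports "HOL-Complex_Analysis.Complex_Analysis"
begin

definition qbr :: "real \<Rightarrow> complex \<Rightarrow> complex" where
  "qbr q chi = (of_real q powr chi - of_real q powr (- chi)) / (of_real q - 1 / of_real q)"

definition qbr_r :: "real \<Rightarrow> real \<Rightarrow> real" where
  "qbr_r q x = (q powr x - q powr (- x)) / (q - 1 / q)"

definition qD :: "real \<Rightarrow> (complex \<Rightarrow> complex) \<Rightarrow> complex \<Rightarrow> complex" where
  "qD q F z = (if z = 0 then deriv F 0
               else (F (of_real q * z) - F (z / of_real q)) / ((of_real q - 1 / of_real q) * z))"

definition tcoeff :: "(complex \<Rightarrow> complex) \<Rightarrow> nat \<Rightarrow> complex" where
  "tcoeff f n = (deriv ^^ n) f 0 / of_nat (fact n)"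

definition Lq :: "real \<Rightarrow> complex \<Rightarrow> nat \<Rightarrow> complex" where
  "Lq q eta n = qbr q (1 + eta) / qbr q (of_nat n + eta)"

text \<open>The operator J^eta_q: J f z = z + sum_{n>=2} L_n a_n z^n, written as a power series
  (note a_0 = 0, a_1 = 1, L_1 = 1 for f in Sigma).\<close>
definition Jq :: "real \<Rightarrow> complex \<Rightarrow> (complex \<Rightarrow> complex) \<Rightarrow> complex \<Rightarrow> complex" where
  "Jq q eta f z = z + (\<Sum>n. (if n \<ge> 2 then Lq q eta n * tcoeff f n * z ^ n else 0))"

definition subord :: "(complex \<Rightarrow> complex) \<Rightarrow> (complex \<Rightarrow> complex) \<Rightarrow> bool" where
  "subord F G \<longleftrightarrow> (\<exists>h. h holomorphic_on ball 0 1 \<and> h 0 = 0 \<and>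
      (\<forall>z\<in>ball 0 1. norm (h z) < 1) \<and> (\<forall>z\<in>ball 0 1. F z = G (h z)))"

text \<open>The class Sigma: normalized univalent f on the disk, with g an inverse of f near 0
  that extends univalently (holomorphic and injective) to the whole disk.\<close>
definition bi_univalent_inv :: "(complex \<Rightarrow> complex) \<Rightarrow> (complex \<Rightarrow> complex) \<Rightarrow> bool" where
  "bi_univalent_inv f g \<longleftrightarrow>
     f holomorphic_on ball 0 1 \<and> f 0 = 0 \<and> deriv f 0 = 1 \<and> inj_on f (ball 0 1) \<and>
     g holomorphic_on ball 0 1 \<and> inj_on g (ball 0 1) \<and>
     (\<exists>e>0. \<forall>z\<in>ball 0 e. g (f z) = z)"

text \<open>The expression 2 {D_q[z D_q F(z)]}^lambda / D_q[F(z) - F(-z)] (principal branch).\<close>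
definition Cexpr :: "real \<Rightarrow> real \<Rightarrow> (complex \<Rightarrow> complex) \<Rightarrow> complex \<Rightarrow> complex" where
  "Cexpr q lam F z = 2 * (qD q (\<lambda>t. t * qD q F t) z) powr (of_real lam)
                       / qD q (\<lambda>t. F t - F (- t)) z"

text \<open>The class C_Sigma^eta_q(lambda; phi) (case mu = 0).\<close>
definition classC :: "real \<Rightarrow> complex \<Rightarrow> real \<Rightarrow> (complex \<Rightarrow> complex) \<Rightarrow> (complex \<Rightarrow> complex) \<Rightarrow> bool" where
  "classC q eta lam phi f \<longleftrightarrow> (\<exists>g. bi_univalent_inv f g \<and>
      subord (Cexpr q lam (Jq q eta f)) phi \<and>
      subord (Cexpr q lam (Jq q eta g)) phi)"

end

theory Submission
  imports Defs
begin


lemma norm_qpow: "0 < q \<Longrightarrow> norm (complex_of_real q powr w) = q powr Re w"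
  by (subst norm_powr_real_powr) auto

lemma qbr_norm_ge1:
  assumes q: "0 < q" "q < 1" and w: "Re w \<ge> 1"
  shows "norm (qbr q w) \<ge> 1"
proof -
  have a: "q powr Re w \<le> q" using q w
    by (metis powr_mono' powr_one_eq_one powr_one less_eq_real_def zero_le_one)
  have b: "q powr (- Re w) \<ge> 1 / q" using q w
  proof -
    have "q powr (- Re w) \<ge> q powr (-1)" using q w by (intro powr_mono') auto
    thus ?thesis using q by (simp add: powr_minus divide_inverse)
  qed
  have "norm (complex_of_real q powr w - complex_of_real q powr (- w)) \<ge>
        norm (complex_of_real q powr (- w)) - norm (complex_of_real q powr w)"
    by (metis norm_minus_commute norm_triangle_ineq2)
  hence c: "norm (complex_of_real q powr w - complex_of_real q powr (- w)) \<ge> 1/q - q"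
    using a b q by (simp add: norm_qpow)
  have d: "norm (complex_of_real q - 1 / complex_of_real q) = 1/q - q"
  proof -
    have "complex_of_real q - 1 / complex_of_real q = complex_of_real (q - 1/q)" by simp
    also have "norm \<dots> = 1/q - q" using q
      using mult_strict_mono[of q 1 q 1] q by (simp only: norm_of_real) (simp add: field_simps abs_if)
    finally show ?thesis .
  qed
  have e: "1/q - q > 0" using q by (simp add: field_simps) (metis less_trans mult_strict_mono' less_eq_real_def mult_1 order_less_le_trans zero_le_one q(2) q(1) mult_less_cancel_right1)
  show ?thesis unfolding qbr_def norm_divide d using c e by simp
qed

lemma qbr_nz:
  assumes q: "0 < q" "q < 1" and w: "Re w > 0"
  shows "qbr q w \<noteq> 0"
proof -
  have a: "q powr Re w < 1" using q w powr_less_mono2[of "Re w" q 1] by simp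
  have b: "q powr (- Re w) > 1" using a q powr_gt_zero[of q "Re w"] by (simp add: powr_minus one_less_inverse)
  have "complex_of_real q powr w \<noteq> complex_of_real q powr (- w)"
    using a b norm_qpow[OF q(1), of w] norm_qpow[OF q(1), of "-w"] by auto
  moreover have "complex_of_real q - 1 / complex_of_real q \<noteq> 0"
  proof -
    have "q - 1/q \<noteq> 0" using q mult_strict_mono[of q 1 q 1] by (simp add: field_simps)
    moreover have "complex_of_real q - 1 / complex_of_real q = of_real (q - 1/q)" by simp
    ultimately show ?thesis by (metis of_real_eq_0_iff)
  qed
  ultimately show ?thesis unfolding qbr_def by simp
qed


definition qc :: "real \<Rightarrow> nat \<Rightarrow> complex" where
  "qc q n = complex_of_real (qbr_r q (real n))"

definition qDf :: "real \<Rightarrow> complex fps \<Rightarrow> complex fps" where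
  "qDf q F = Abs_fps (\<lambda>n. qc q (Suc n) * F $ Suc n)"

lemma qdiff_nz: "0 < q \<Longrightarrow> q < 1 \<Longrightarrow> complex_of_real q - 1 / complex_of_real q \<noteq> 0"
proof -
  assume q: "0 < q" "q < 1"
  have "q - 1/q \<noteq> 0" using q mult_strict_mono[of q 1 q 1] by (simp add: field_simps)
  moreover have "complex_of_real q - 1 / complex_of_real q = of_real (q - 1/q)" by simp
  ultimately show ?thesis by (metis of_real_eq_0_iff)
qed

lemma qc_eq: assumes "0 < q" 
  shows "qc q m = (complex_of_real q ^ m - (1 / complex_of_real q) ^ m) / (complex_of_real q - 1 / complex_of_real q)"
proof -
  have "q powr real m = q ^ m" using assms by (simp add: powr_realpow)
  moreover have "q powr (- real m) = (1/q) ^ m" using assms by (simp add: powr_minus powr_realpow power_one_over inverse_eq_divide)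
  ultimately show ?thesis unfolding qc_def qbr_r_def by simp
qed

lemma shift1:
  fixes F :: "complex fps"
  assumes "f has_fps_expansion F" "F $ 0 = 0"
  shows "(\<lambda>x. if x = 0 then F $ 1 else f x / x) has_fps_expansion fps_shift 1 F"
proof (cases "F = 0")
  case True
  then have "eventually (\<lambda>z. f z = 0) (nhds 0)" using assms(1) by (simp add: has_fps_expansion_0_iff)
  hence "eventually (\<lambda>z. (if z = 0 then F $ 1 else f z / z) = 0) (nhds 0)"
    by eventually_elim (auto simp: True)
  thus ?thesis using True by (simp add: has_fps_expansion_0_iff)
next
  case False
  hence "1 \<le> subdegree F" using assms(2) by (metis less_one not_le subdegree_eq_0_iff)
  from has_fps_expansion_shift[OF assms(1) this, of "F $ 1"] show ?thesis by (simp only: power_one_right)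
qed

lemma lin_exp: "(\<lambda>z. c * z) has_fps_expansion fps_const (c::complex) * fps_X"
  using has_fps_expansion_cmult_left[OF has_fps_expansion_fps_X, of c] by simp

lemma qD_exp:
  fixes FF :: "complex fps" and F :: "complex \<Rightarrow> complex"
  assumes q: "0 < q" "q < 1" and F: "F has_fps_expansion FF" and F0: "FF $ 0 = 0"
  shows "qD q F has_fps_expansion qDf q FF"
proof -
  define Q where "Q = complex_of_real q"
  have Qnz: "Q \<noteq> 0" using q by (simp add: Q_def)
  have e1: "(\<lambda>z. F (Q * z)) has_fps_expansion Abs_fps (\<lambda>n. Q ^ n * FF $ n)"
    using has_fps_expansion_compose[OF F lin_exp[of Q]] by (simp add: fps_compose_linear o_def)
  have e2: "(\<lambda>z. F (z / Q)) has_fps_expansion Abs_fps (\<lambda>n. (1/Q) ^ n * FF $ n)"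
  proof -
    have "(\<lambda>z. F ((1/Q) * z)) has_fps_expansion Abs_fps (\<lambda>n. (1/Q) ^ n * FF $ n)"
      using has_fps_expansion_compose[OF F lin_exp[of "1/Q"]] by (simp add: fps_compose_linear o_def)
    moreover have "(\<lambda>z. F ((1/Q) * z)) = (\<lambda>z. F (z / Q))" by (simp add: field_simps)
    ultimately show ?thesis by simp
  qed
  define DD where "DD = Abs_fps (\<lambda>n. (Q ^ n - (1/Q) ^ n) * FF $ n)"
  have e3: "(\<lambda>z. F (Q * z) - F (z / Q)) has_fps_expansion DD"
  proof -
    have "(\<lambda>z. F (Q * z) - F (z / Q)) has_fps_expansion
          Abs_fps (\<lambda>n. Q ^ n * FF $ n) - Abs_fps (\<lambda>n. (1/Q) ^ n * FF $ n)"
      by (rule has_fps_expansion_diff[OF e1 e2])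
    moreover have "Abs_fps (\<lambda>n. Q ^ n * FF $ n) - Abs_fps (\<lambda>n. (1/Q) ^ n * FF $ n) = DD"
      by (simp add: DD_def fps_eq_iff algebra_simps)
    ultimately show ?thesis by simp
  qed
  have DD0: "DD $ 0 = 0" by (simp add: DD_def)
  define c where "c = 1 / (Q - 1/Q)"
  have e4: "(\<lambda>x. c * (if x = 0 then DD $ 1 else (F (Q * x) - F (x / Q)) / x)) has_fps_expansion
           fps_const c * fps_shift 1 DD"
    by (rule has_fps_expansion_cmult_left[OF shift1[OF e3 DD0]])
  have qd: "Q - 1/Q \<noteq> 0" using qdiff_nz[OF q] by (simp add: Q_def)
  have d1: "FF $ Suc 0 = deriv F 0" using fps_nth_fps_expansion[OF F, of 1] by simp
  have fun_eq: "(\<lambda>x. c * (if x = 0 then DD $ 1 else (F (Q * x) - F (x / Q)) / x)) = qD q F"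
  proof
    fix x show "c * (if x = 0 then DD $ 1 else (F (Q * x) - F (x / Q)) / x) = qD q F x"
    proof (cases "x = 0")
      case True thus ?thesis using qd by (simp add: qD_def c_def DD_def d1)
    next
      case False thus ?thesis using qd by (simp add: qD_def c_def Q_def field_simps)
    qed
  qed
  have fps_eq: "fps_const c * fps_shift 1 DD = qDf q FF"
    by (simp add: fps_eq_iff qDf_def DD_def c_def qc_eq[OF q(1)] Q_def field_simps)
  show ?thesis using e4 unfolding fun_eq fps_eq .
qed


lemma qc1: "0 < q \<Longrightarrow> q < 1 \<Longrightarrow> qc q 1 = 1"
  using qdiff_nz[of q] by (simp add: qc_eq)

lemma qDf_nth: "qDf q F $ n = qc q (Suc n) * F $ Suc n"
  by (simp add: qDf_def)

lemma gchoose2: "(c::complex) gchoose 2 = c * (c - 1) / 2"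
proof -
  have "of_nat (Suc 1) * (c gchoose Suc 1) = c * (c - 1 gchoose 1)" by (rule gbinomial_absorption)
  thus ?thesis by (simp add: numeral_2_eq_2 field_simps)
qed

lemma Cexpr_exp:
  fixes FJ :: "complex fps" and F :: "complex \<Rightarrow> complex"
  assumes q: "0 < q" "q < 1" and F: "F has_fps_expansion FJ" and F0: "FJ $ 0 = 0" and F1: "FJ $ 1 = 1"
  shows "\<exists>C. Cexpr q lam F has_fps_expansion C \<and>
     C $ 1 = of_real lam * qc q 2 ^ 2 * FJ $ 2 \<and>
     C $ 2 = (of_real lam * qc q 3 - 1) * qc q 3 * FJ $ 3
             + of_real lam * (of_real lam - 1) / 2 * qc q 2 ^ 4 * (FJ $ 2)^2"
proof -
  define c where "c = complex_of_real lam"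
  define Q1 where "Q1 = qDf q FJ"
  have e1: "qD q F has_fps_expansion Q1" unfolding Q1_def by (rule qD_exp[OF q F F0])
  have e2: "(\<lambda>t. t * qD q F t) has_fps_expansion fps_X * Q1"
    by (rule has_fps_expansion_mult[OF has_fps_expansion_fps_X e1])
  define Q2 where "Q2 = qDf q (fps_X * Q1)"
  have e3: "qD q (\<lambda>t. t * qD q F t) has_fps_expansion Q2" unfolding Q2_def
    by (rule qD_exp[OF q e2]) simp
  have Q20: "Q2 $ 0 = 1" using qc1[OF q] F1 by (simp add: Q2_def Q1_def qDf_nth)
  have Q21: "Q2 $ Suc 0 = qc q 2 ^ 2 * FJ $ 2"
    by (simp add: Q2_def Q1_def qDf_nth numeral_2_eq_2 power2_eq_square)
  have Q22: "Q2 $ 2 = qc q 3 ^ 2 * FJ $ 3"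
    by (simp add: Q2_def Q1_def qDf_nth numeral_2_eq_2 numeral_3_eq_3 power2_eq_square)
  define R where "R = Q2 - 1"
  have e4: "(\<lambda>z. qD q (\<lambda>t. t * qD q F t) z - 1) has_fps_expansion R"
    unfolding R_def by (rule has_fps_expansion_diff[OF e3 has_fps_expansion_1])
  have R0: "R $ 0 = 0" by (simp add: R_def Q20)
  define P where "P = fps_compose (fps_binomial c) R"
  have e5: "(\<lambda>z. (qD q (\<lambda>t. t * qD q F t) z) powr c) has_fps_expansion P"
  proof -
    have "((\<lambda>x. (1 + x) powr c) \<circ> (\<lambda>z. qD q (\<lambda>t. t * qD q F t) z - 1)) has_fps_expansion P"
      unfolding P_def by (rule has_fps_expansion_compose[OF has_fps_expansion_binomial_complex e4 R0])
    thus ?thesis by (simp add: o_def)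
  qed
  have P0: "P $ 0 = 1" by (simp add: P_def)
  have P1: "P $ 1 = c * qc q 2 ^ 2 * FJ $ 2"
    using R0 by (simp add: P_def fps_compose_nth R_def Q21)
  have P2: "P $ 2 = c * qc q 3 ^ 2 * FJ $ 3 + c * (c - 1) / 2 * (qc q 2 ^ 2 * FJ $ 2) ^ 2"
  proof -
    have "P $ 2 = (fps_binomial c) $ 1 * R $ 2 + (fps_binomial c) $ 2 * (R^2) $ 2"
      using R0 by (simp add: P_def fps_compose_nth numeral_2_eq_2)
    moreover have "(R^2) $ 2 = (R $ 1)^2"
      using R0 by (simp add: power2_eq_square fps_mult_nth numeral_2_eq_2)
    moreover have "R $ 1 = qc q 2 ^ 2 * FJ $ 2" "R $ 2 = qc q 3 ^ 2 * FJ $ 3"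
      by (simp_all add: R_def Q21 Q22)
    ultimately show ?thesis by (simp add: gchoose2)
  qed
  have e6: "(\<lambda>t. F t - F (- t)) has_fps_expansion FJ - Abs_fps (\<lambda>n. (-1) ^ n * FJ $ n)"
  proof -
    have "(F \<circ> (\<lambda>t. - t)) has_fps_expansion fps_compose FJ (- fps_X)"
      by (rule has_fps_expansion_compose[OF F has_fps_expansion_minus[OF has_fps_expansion_fps_X]]) simp
    hence "(\<lambda>t. F (- t)) has_fps_expansion Abs_fps (\<lambda>n. (-1) ^ n * FJ $ n)"
      by (simp add: o_def fps_compose_uminus')
    thus ?thesis by (rule has_fps_expansion_diff[OF F])
  qed
  define D where "D = qDf q (FJ - Abs_fps (\<lambda>n. (-1) ^ n * FJ $ n))"
  have e7: "qD q (\<lambda>t. F t - F (- t)) has_fps_expansion D"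
    unfolding D_def by (rule qD_exp[OF q e6]) (simp add: F0)
  have D0: "D $ 0 = 2" using qc1[OF q] F1 by (simp add: D_def qDf_nth)
  have D1: "D $ 1 = 0" by (simp add: D_def qDf_nth numeral_2_eq_2)
  have D2: "D $ 2 = 2 * qc q 3 * FJ $ 3" by (simp add: D_def qDf_nth numeral_3_eq_3)
  define C where "C = fps_const 2 * P / D"
  have e8: "Cexpr q lam F has_fps_expansion C"
  proof -
    have "(\<lambda>z. 2 * (qD q (\<lambda>t. t * qD q F t) z) powr c / qD q (\<lambda>t. F t - F (- t)) z) has_fps_expansion C"
      unfolding C_def
      by (rule has_fps_expansion_divide'[OF has_fps_expansion_cmult_left[OF e5] e7]) (simp add: D0)
    moreover have "Cexpr q lam F = (\<lambda>z. 2 * (qD q (\<lambda>t. t * qD q F t) z) powr c / qD q (\<lambda>t. F t - F (- t)) z)"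
      by (rule ext) (simp add: Cexpr_def c_def)
    ultimately show ?thesis by simp
  qed
  have CD: "C * D = fps_const 2 * P"
    using D0 by (simp add: C_def fps_divide_unit mult.assoc inverse_mult_eq_1)
  have C0: "C $ 0 = 1"
  proof -
    have "(C * D) $ 0 = (fps_const 2 * P) $ 0" by (simp only: CD)
    thus ?thesis using D0 P0 by simp
  qed
  have C1: "C $ 1 = c * qc q 2 ^ 2 * FJ $ 2"
  proof -
    have "(C * D) $ 1 = (fps_const 2 * P) $ 1" by (simp only: CD)
    thus ?thesis using D0 D1 P1 C0 by (simp add: fps_mult_nth)
  qed
  have C2: "C $ 2 = (c * qc q 3 - 1) * qc q 3 * FJ $ 3 + c * (c - 1) / 2 * qc q 2 ^ 4 * (FJ $ 2)^2"
  proof -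
    have "(C * D) $ 2 = (fps_const 2 * P) $ 2" by (simp only: CD)
    hence "C $ 0 * D $ 2 + C $ 1 * D $ 1 + C $ 2 * D $ 0 = 2 * P $ 2"
      by (simp add: fps_mult_nth numeral_2_eq_2)
    hence "2 * qc q 3 * FJ $ 3 + 2 * C $ 2 = 2 * P $ 2" using C0 D0 D1 D2 by (simp add: mult.commute)
    hence "2 * (C $ 2 + qc q 3 * FJ $ 3) = 2 * P $ 2" by (simp add: algebra_simps)
    hence "C $ 2 + qc q 3 * FJ $ 3 = P $ 2" by (metis mult_cancel_left zero_neq_numeral)
    hence "C $ 2 = P $ 2 - qc q 3 * FJ $ 3" by (simp add: algebra_simps)
    thus ?thesis unfolding P2 by (simp add: field_simps eval_nat_numeral)
  qed
  show ?thesis using e8 C1 C2 by (auto simp: c_def)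
qed


lemma schwarz_coeffs:
  fixes h :: "complex \<Rightarrow> complex"
  assumes holh: "h holomorphic_on ball 0 1" and h0: "h 0 = 0" and hb: "\<forall>z\<in>ball 0 1. norm (h z) < 1"
  shows "norm (deriv h 0) \<le> 1 \<and> norm ((deriv ^^ 2) h 0 / 2) \<le> 1 - norm (deriv h 0) ^ 2"
proof -
  have no: "\<And>z. norm z < 1 \<Longrightarrow> norm (h z) < 1" using hb by auto
  note S = Schwarz_Lemma[OF holh h0 no]
  define u1 where "u1 = deriv h 0"
  have u1b: "norm u1 \<le> 1" using S(2)[of 0] by (simp add: u1_def)
  define H where "H = fps_expansion h 0"
  have He: "h has_fps_expansion H" unfolding H_def
    by (rule has_fps_expansion_fps_expansion[OF _ _ holh]) auto
  have H0: "H $ 0 = 0" using fps_nth_fps_expansion[OF He, of 0] h0 by simp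
  have H1: "H $ 1 = u1" using fps_nth_fps_expansion[OF He, of 1] by (simp add: u1_def)
  have H1': "H $ Suc 0 = u1" using H1 by simp
  have H2: "H $ 2 = (deriv ^^ 2) h 0 / 2" using fps_nth_fps_expansion[OF He, of 2] by simp
  have "norm (H $ 2) \<le> 1 - norm u1 ^ 2"
  proof (cases "norm u1 = 1")
    case True
    then obtain \<alpha> where al: "\<And>z. norm z < 1 \<Longrightarrow> h z = \<alpha> * z" 
      using S(3)[of 0] by (auto simp: u1_def)
    have "eventually (\<lambda>z::complex. z \<in> ball 0 1) (nhds 0)" by (intro eventually_nhds_in_open) auto
    hence "eventually (\<lambda>z. h z = \<alpha> * z) (nhds 0)" by eventually_elim (simp add: al)
    hence "h has_fps_expansion fps_const \<alpha> * fps_X \<longleftrightarrow> (\<lambda>z. \<alpha> * z) has_fps_expansion fps_const \<alpha> * fps_X"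
      by (intro has_fps_expansion_cong) auto
    hence "h has_fps_expansion fps_const \<alpha> * fps_X" using lin_exp by simp
    hence "H = fps_const \<alpha> * fps_X" using He fps_expansion_unique_complex by blast
    thus ?thesis using True by (simp add: numeral_2_eq_2)
  next
    case False
    hence u1l: "norm u1 < 1" using u1b by simp
    define k where "k z = (if z = 0 then u1 else h z / z)" for z
    have holk: "k holomorphic_on ball 0 1"
      by (rule pole_theorem_open_0[OF holh, where a=0]) (auto simp: k_def u1_def h0)
    have kb: "norm (k z) < 1" if z: "z \<in> ball 0 1" for z
    proof (cases "z = 0")
      case True thus ?thesis using u1l by (simp add: k_def)
    next
      case nz: False
      have le: "norm (h z) \<le> norm z" using S(1)[of z] z by simp
      have "norm (h z) \<noteq> norm z"
      proof
        assume eq: "norm (h z) = norm z"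
        then obtain \<alpha> where al: "\<And>z. norm z < 1 \<Longrightarrow> h z = \<alpha> * z" and na: "norm \<alpha> = 1"
          using S(3)[of 0] z nz by auto
        have "eventually (\<lambda>z::complex. z \<in> ball 0 1) (nhds 0)" by (intro eventually_nhds_in_open) auto
        hence "eventually (\<lambda>z. h z = \<alpha> * z) (nhds 0)" by eventually_elim (simp add: al)
        hence "h has_fps_expansion fps_const \<alpha> * fps_X \<longleftrightarrow> (\<lambda>z. \<alpha> * z) has_fps_expansion fps_const \<alpha> * fps_X"
          by (intro has_fps_expansion_cong) auto
        hence "h has_fps_expansion fps_const \<alpha> * fps_X" using lin_exp by simp
        hence "H = fps_const \<alpha> * fps_X" using He fps_expansion_unique_complex by blast
        hence "u1 = \<alpha>" using H1 by simp
        thus False using na u1l by simp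
      qed
      hence "norm (h z) < norm z" using le by simp
      thus ?thesis using nz by (simp add: k_def norm_divide)
    qed
    have Ke: "k has_fps_expansion fps_shift 1 H"
    proof -
      have "(\<lambda>x. if x = 0 then H $ 1 else h x / x) has_fps_expansion fps_shift 1 H"
        by (rule shift1[OF He H0])
      moreover have "(\<lambda>x. if x = 0 then H $ 1 else h x / x) = k" by (rule ext) (simp add: k_def H1')
      ultimately show ?thesis by simp
    qed
    have dk0: "deriv k 0 = H $ 2"
      using fps_nth_fps_expansion[OF Ke, of 1] by (simp add: numeral_2_eq_2)
    have dk: "(k has_field_derivative deriv k 0) (at 0)"
      using holk by (intro holomorphic_derivI[of _ "ball 0 1"]) auto
    define m where "m z = (k z - u1) / (1 - cnj u1 * k z)" for z
    have den: "1 - cnj u1 * k z \<noteq> 0" if "z \<in> ball 0 1" for z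
    proof -
      have "norm (cnj u1 * k z) < 1"
        using kb[OF that] u1l by (simp add: norm_mult) (metis mult_le_one norm_ge_zero less_le_not_le mult_strict_mono' order.strict_iff_not mult_1 le_less)
      thus ?thesis by auto
    qed
    have holm: "m holomorphic_on ball 0 1" unfolding m_def
      by (intro holomorphic_intros holk den)
    have k0: "k 0 = u1" by (simp add: k_def)
    have m0: "m 0 = 0" by (simp add: m_def k0)
    have mb: "\<And>z. norm z < 1 \<Longrightarrow> norm (m z) < 1"
    proof -
      fix z :: complex assume "norm z < 1"
      hence "norm (Moebius_function 0 u1 (k z)) < 1"
        using kb u1l by (intro Moebius_function_norm_lt_1) auto
      thus "norm (m z) < 1" by (simp add: Moebius_function_simple m_def)
    qed
    have nz1: "1 - cnj u1 * u1 \<noteq> 0"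
    proof -
      have "cnj u1 * u1 = of_real (norm u1 ^ 2)" using complex_norm_square[of u1] by (simp add: mult.commute)
      moreover have "norm u1 ^ 2 < 1" using u1l by (simp add: power_less_one_iff)
      ultimately show ?thesis by (metis of_real_1 of_real_eq_iff right_minus_eq less_irrefl)
    qed
    have dm: "(m has_field_derivative deriv k 0 / (1 - cnj u1 * u1)) (at 0)"
    proof -
      have "((\<lambda>z. (k z - u1) / (1 - cnj u1 * k z)) has_field_derivative
          ((deriv k 0 - 0) * (1 - cnj u1 * k 0) - (k 0 - u1) * (0 - cnj u1 * deriv k 0)) / ((1 - cnj u1 * k 0) * (1 - cnj u1 * k 0))) (at 0)"
        using den[of 0] by (intro DERIV_divide DERIV_diff DERIV_cmult dk DERIV_const) auto
      moreover have "((deriv k 0 - 0) * (1 - cnj u1 * k 0) - (k 0 - u1) * (0 - cnj u1 * deriv k 0)) / ((1 - cnj u1 * k 0) * (1 - cnj u1 * k 0))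
          = deriv k 0 / (1 - cnj u1 * u1)"
        using nz1 by (simp add: k0)
      ultimately show ?thesis by (simp add: m_def[abs_def])
    qed
    have "norm (deriv m 0) \<le> 1" using Schwarz_Lemma(2)[OF holm m0 mb, of 0] by simp
    hence "norm (deriv k 0 / (1 - cnj u1 * u1)) \<le> 1" using DERIV_imp_deriv[OF dm] by simp
    moreover have "norm (1 - cnj u1 * u1) = 1 - norm u1 ^ 2"
    proof -
      have c: "cnj u1 * u1 = of_real (norm u1 ^ 2)" using complex_norm_square[of u1] by (simp add: mult.commute)
      have "1 - cnj u1 * u1 = of_real (1 - norm u1 ^ 2)" unfolding c by simp
      moreover have "norm u1 ^ 2 \<le> 1" using u1b by (simp add: power_le_one)
      ultimately show ?thesis by (simp only: norm_of_real)
    qed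
    ultimately have "norm (deriv k 0) \<le> 1 - norm u1 ^ 2"
      using u1l power_less_one_iff[of "norm u1" 2] by (simp add: norm_divide divide_le_eq)
    thus ?thesis by (simp add: dk0)
  qed
  thus ?thesis using u1b H2 by (simp add: u1_def)
qed


lemma tcoeff_eq: "tcoeff f n = fps_expansion f 0 $ n"
  by (simp add: tcoeff_def fps_expansion_def)

lemma Lq_bound:
  assumes q: "0 < q" "q < 1" and eta: "Re eta > -1" and n: "2 \<le> n"
  shows "norm (Lq q eta n) \<le> norm (qbr q (1 + eta))"
proof -
  have "norm (qbr q (of_nat n + eta)) \<ge> 1" using n eta by (intro qbr_norm_ge1[OF q]) auto
  thus ?thesis unfolding Lq_def norm_divide
    using divide_left_mono[of 1 "norm (qbr q (of_nat n + eta))" "norm (qbr q (1 + eta))"] by (cases "qbr q (of_nat n + eta) = 0") auto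
qed

lemma J_exp:
  assumes q: "0 < q" "q < 1" and eta: "Re eta > -1" and holf: "f holomorphic_on ball 0 1"
  shows "Jq q eta f has_fps_expansion
           Abs_fps (\<lambda>n. if n = 1 then 1 else if 2 \<le> n then Lq q eta n * tcoeff f n else 0)"
    (is "_ has_fps_expansion ?JF")
proof (rule has_fps_expansionI)
  define Ff where "Ff = fps_expansion f 0"
  define M where "M = norm (qbr q (1 + eta))"
  have rad: "fps_conv_radius Ff \<ge> 1" unfolding Ff_def
    using holf by (intro conv_radius_fps_expansion) (simp add: one_ereal_def)
  have ev: "eventually (\<lambda>u::complex. u \<in> ball 0 1) (nhds 0)" by (intro eventually_nhds_in_open) auto
  show "eventually (\<lambda>u. (\<lambda>n. ?JF $ n * u ^ n) sums Jq q eta f u) (nhds 0)"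
    using ev
  proof eventually_elim
    case (elim u)
    define T where "T n = (if 2 \<le> n then Lq q eta n * tcoeff f n * u ^ n else 0)" for n
    have "ereal (norm u) < 1" using elim by simp
    hence "ereal (norm u) < fps_conv_radius Ff" using rad by (meson less_le_trans)
    hence s1: "summable (\<lambda>n. norm (Ff $ n * u ^ n))" by (rule norm_summable_fps)
    have sT: "summable T"
    proof (rule summable_comparison_test)
      show "\<exists>N. \<forall>n\<ge>N. norm (T n) \<le> M * norm (Ff $ n * u ^ n)"
      proof (intro exI allI impI)
        fix n :: nat
        show "norm (T n) \<le> M * norm (Ff $ n * u ^ n)"
        proof (cases "2 \<le> n")
          case True
          have "norm (T n) = norm (Lq q eta n) * norm (Ff $ n * u ^ n)"
            using True by (simp add: T_def tcoeff_eq Ff_def norm_mult mult.assoc)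
          also have "\<dots> \<le> M * norm (Ff $ n * u ^ n)"
            unfolding M_def by (intro mult_right_mono Lq_bound[OF q eta True]) auto
          finally show ?thesis .
        qed (simp add: T_def M_def)
      qed
      show "summable (\<lambda>n. M * norm (Ff $ n * u ^ n))" by (rule summable_mult[OF s1])
    qed
    have "(\<lambda>n. (if n = 1 then u else 0) + T n) sums (u + suminf T)"
      by (rule sums_add[OF _ summable_sums[OF sT]]) (use sums_single[of 1 "\<lambda>_. u"] in simp)
    moreover have "(\<lambda>n. (if n = 1 then u else 0) + T n) = (\<lambda>n. ?JF $ n * u ^ n)"
      by (rule ext) (simp add: T_def)
    moreover have "Jq q eta f u = u + suminf T"
      by (simp add: Jq_def T_def[abs_def])
    ultimately show ?case by simp
  qed
qed


lemma key:
  fixes FJ :: "complex fps" and F phi :: "complex \<Rightarrow> complex" and E1 lam :: real and E2 :: complex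
  assumes q: "0 < q" "q < 1" and F: "F has_fps_expansion FJ" and F0: "FJ $ 0 = 0" and F1: "FJ $ 1 = 1"
    and sub: "subord (Cexpr q lam F) phi"
    and phi_hol: "phi holomorphic_on ball 0 1"
    and E1: "deriv phi 0 = of_real E1" and E2: "E2 = (deriv ^^ 2) phi 0 / 2"
  shows "\<exists>u1 u2::complex. norm u1 \<le> 1 \<and> norm u2 \<le> 1 - norm u1 ^ 2 \<and>
     of_real lam * qc q 2 ^ 2 * FJ $ 2 = of_real E1 * u1 \<and>
     (of_real lam * qc q 3 - 1) * qc q 3 * FJ $ 3
             + of_real lam * (of_real lam - 1) / 2 * qc q 2 ^ 4 * (FJ $ 2)^2 = of_real E1 * u2 + E2 * u1 ^ 2"
proof -
  obtain C :: "complex fps" where Ce: "Cexpr q lam F has_fps_expansion C"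
     and C1: "C $ 1 = of_real lam * qc q 2 ^ 2 * FJ $ 2"
     and C2: "C $ 2 = (of_real lam * qc q 3 - 1) * qc q 3 * FJ $ 3
             + of_real lam * (of_real lam - 1) / 2 * qc q 2 ^ 4 * (FJ $ 2)^2"
    using Cexpr_exp[OF q F F0 F1, of lam] by blast
  obtain h where holh: "h holomorphic_on ball 0 1" and h0: "h 0 = 0"
    and hb: "\<forall>z\<in>ball 0 1. norm (h z) < 1" and heq: "\<forall>z\<in>ball 0 1. Cexpr q lam F z = phi (h z)"
    using sub unfolding subord_def by blast
  define H where "H = fps_expansion h 0"
  define Phi where "Phi = fps_expansion phi 0"
  have He: "h has_fps_expansion H" unfolding H_def
    by (rule has_fps_expansion_fps_expansion[OF _ _ holh]) auto
  have Pe: "phi has_fps_expansion Phi" unfolding Phi_def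
    by (rule has_fps_expansion_fps_expansion[OF _ _ phi_hol]) auto
  have H0: "H $ 0 = 0" using fps_nth_fps_expansion[OF He, of 0] h0 by simp
  have comp: "(phi \<circ> h) has_fps_expansion fps_compose Phi H"
    by (rule has_fps_expansion_compose[OF Pe He H0])
  have ev: "eventually (\<lambda>u::complex. u \<in> ball 0 1) (nhds 0)" by (intro eventually_nhds_in_open) auto
  hence "eventually (\<lambda>u. Cexpr q lam F u = (phi \<circ> h) u) (nhds 0)"
    by eventually_elim (simp add: heq)
  hence "Cexpr q lam F has_fps_expansion fps_compose Phi H"
    using comp has_fps_expansion_cong by blast
  hence CPH: "C = fps_compose Phi H" using Ce fps_expansion_unique_complex by blast
  define u1 where "u1 = H $ 1"
  define u2 where "u2 = H $ 2"
  have u1d: "u1 = deriv h 0" using fps_nth_fps_expansion[OF He, of 1] by (simp add: u1_def)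
  have u2d: "u2 = (deriv ^^ 2) h 0 / 2" using fps_nth_fps_expansion[OF He, of 2] by (simp add: u2_def)
  have Phi1: "Phi $ 1 = of_real E1" using fps_nth_fps_expansion[OF Pe, of 1] E1 by simp
  have Phi2: "Phi $ 2 = E2" using fps_nth_fps_expansion[OF Pe, of 2] unfolding E2 by simp
  have c1: "C $ 1 = of_real E1 * u1"
    using H0 Phi1 by (simp add: CPH fps_compose_nth u1_def)
  have c2: "C $ 2 = of_real E1 * u2 + E2 * u1 ^ 2"
  proof -
    have "C $ 2 = Phi $ 1 * H $ 2 + Phi $ 2 * (H^2) $ 2"
      using H0 by (simp add: CPH fps_compose_nth numeral_2_eq_2)
    moreover have "(H^2) $ 2 = (H $ 1)^2"
      using H0 by (simp add: power2_eq_square fps_mult_nth numeral_2_eq_2)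
    ultimately show ?thesis using Phi1 Phi2 by (simp add: u1_def u2_def)
  qed
  have sb: "norm u1 \<le> 1 \<and> norm u2 \<le> 1 - norm u1 ^ 2"
    using schwarz_coeffs[OF holh h0 hb] by (simp add: u1d u2d)
  show ?thesis using sb c1 c2 C1 C2 by metis
qed


lemma inv_coeffs:
  assumes bi: "bi_univalent_inv f g"
  shows "tcoeff g 2 = - tcoeff f 2 \<and> tcoeff g 3 = 2 * tcoeff f 2 ^ 2 - tcoeff f 3"
proof -
  have holf: "f holomorphic_on ball 0 1" and f0: "f 0 = 0" and df: "deriv f 0 = 1"
    and holg: "g holomorphic_on ball 0 1" using bi unfolding bi_univalent_inv_def by auto
  obtain e where e: "e > 0" "\<forall>z\<in>ball 0 e. g (f z) = z" using bi unfolding bi_univalent_inv_def by auto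
  define Ff where "Ff = fps_expansion f 0"
  define Gg where "Gg = fps_expansion g 0"
  have Fe: "f has_fps_expansion Ff" unfolding Ff_def
    by (rule has_fps_expansion_fps_expansion[OF _ _ holf]) auto
  have Ge: "g has_fps_expansion Gg" unfolding Gg_def
    by (rule has_fps_expansion_fps_expansion[OF _ _ holg]) auto
  have F0: "Ff $ 0 = 0" using fps_nth_fps_expansion[OF Fe, of 0] f0 by simp
  have F1: "Ff $ Suc 0 = 1" using fps_nth_fps_expansion[OF Fe, of 1] df by simp
  have comp: "(g \<circ> f) has_fps_expansion fps_compose Gg Ff"
    by (rule has_fps_expansion_compose[OF Ge Fe F0])
  have ev: "eventually (\<lambda>u::complex. u \<in> ball 0 e) (nhds 0)" using e by (intro eventually_nhds_in_open) auto
  hence "eventually (\<lambda>u. (g \<circ> f) u = u) (nhds 0)"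
    by eventually_elim (use e in simp)
  hence "(g \<circ> f) has_fps_expansion fps_X"
    using has_fps_expansion_cong[of "g \<circ> f" "\<lambda>x. x" fps_X fps_X] has_fps_expansion_fps_X by simp
  hence GF: "fps_compose Gg Ff = fps_X" using comp fps_expansion_unique_complex by blast
  have c0: "Gg $ 0 = 0" using arg_cong[OF GF, of "\<lambda>F::complex fps. F $ 0"] by simp
  have c1: "Gg $ 1 = 1" using arg_cong[OF GF, of "\<lambda>F::complex fps. F $ 1"] F0 F1 c0
    by (simp add: fps_compose_nth)
  have c2: "Gg $ 2 = - Ff $ 2" using arg_cong[OF GF, of "\<lambda>F::complex fps. F $ 2"] F0 F1 c0 c1
    by (simp add: fps_compose_nth fps_mult_nth numeral_2_eq_2 power2_eq_square sum.atLeast0_atMost_Suc eq_neg_iff_add_eq_0 add.commute)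
  have c3: "Gg $ 3 = 2 * (Ff $ 2)^2 - Ff $ 3" using arg_cong[OF GF, of "\<lambda>F::complex fps. F $ 3"] F0 F1 c0 c1 c2
    by (simp add: fps_compose_nth fps_mult_nth numeral_2_eq_2 numeral_3_eq_3 power2_eq_square power3_eq_cube sum.atLeast0_atMost_Suc algebra_simps)
  show ?thesis using c2 c3 by (simp add: tcoeff_eq Ff_def Gg_def)
qed


lemma nb_aux:
  fixes u1 u2 E2 :: complex and E1 :: real
  assumes E1: "E1 > 0" and u: "norm u1 \<le> 1" "norm u2 \<le> 1 - norm u1 ^ 2"
  shows "norm (of_real E1 * u2 + E2 * u1^2) \<le> norm (E2 - of_real E1) + E1"
proof -
  have eq: "of_real E1 * u2 + E2 * u1^2 = of_real E1 * (u2 + u1^2) + (E2 - of_real E1) * u1^2"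
    by (simp add: algebra_simps)
  have "norm (of_real E1 * (u2 + u1^2)) \<le> E1 * (norm u2 + norm u1 ^ 2)"
    using E1 norm_triangle_ineq[of u2 "u1^2"] by (simp add: norm_mult norm_power mult_left_mono)
  also have "\<dots> \<le> E1" using E1 u by (simp add: mult_left_le)
  finally have a: "norm (of_real E1 * (u2 + u1^2)) \<le> E1" .
  have "norm ((E2 - of_real E1) * u1^2) \<le> norm (E2 - of_real E1)"
    using u by (simp add: norm_mult norm_power mult_left_le power_le_one)
  with a show ?thesis unfolding eq
    using norm_triangle_ineq[of "of_real E1 * (u2 + u1^2)" "(E2 - of_real E1) * u1^2"] by linarith
qed

lemma alg_final:
  fixes s2 s3 lam E1 :: real and E2 a b L2 L3 u1 u2 v1 v2 :: complex
  assumes s2: "s2 > 0" and s3: "s3 > 1" and lam: "lam \<ge> 1" and E1: "E1 > 0"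
    and L2: "L2 \<noteq> 0" and L3: "L3 \<noteq> 0"
    and Psi_nz: "complex_of_real (2 * (lam * s3 - 1) * s3) * L3 +
              complex_of_real (lam * (lam - 1) * s2 ^ 4) * L2\<^sup>2 \<noteq> 0"
    and Ups_nz: "complex_of_real (2 * (lam * s3 - 1) * s3 * E1\<^sup>2) * L3 +
              complex_of_real lam * (complex_of_real ((lam - 1) * E1\<^sup>2) +
                 complex_of_real (2 * lam) * (complex_of_real E1 - E2)) *
              complex_of_real (s2 ^ 4) * L2\<^sup>2 \<noteq> 0"
    and u: "norm u1 \<le> 1" "norm u2 \<le> 1 - norm u1 ^ 2"
    and v: "norm v1 \<le> 1" "norm v2 \<le> 1 - norm v1 ^ 2"
    and h1: "of_real lam * (of_real s2)^2 * (L2 * a) = of_real E1 * u1"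
    and h2: "(of_real lam * of_real s3 - 1) * of_real s3 * (L3 * b)
             + of_real lam * (of_real lam - 1) / 2 * of_real s2 ^ 4 * (L2 * a)^2 = of_real E1 * u2 + E2 * u1 ^ 2"
    and h3: "of_real lam * (of_real s2)^2 * (L2 * - a) = of_real E1 * v1"
    and h4: "(of_real lam * of_real s3 - 1) * of_real s3 * (L3 * (2 * a^2 - b))
             + of_real lam * (of_real lam - 1) / 2 * of_real s2 ^ 4 * (L2 * - a)^2 = of_real E1 * v2 + E2 * v1 ^ 2"
  shows "norm a \<le> Min {E1 / (lam * norm L2 * s2 ^ 2),
            sqrt (2 * (norm (E2 - E1) + E1) /
              norm (complex_of_real (2 * (lam * s3 - 1) * s3) * L3 +
              complex_of_real (lam * (lam - 1) * s2 ^ 4) * L2\<^sup>2)),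
            E1 * sqrt (2 * E1) /
              sqrt (norm (complex_of_real (2 * (lam * s3 - 1) * s3 * E1\<^sup>2) * L3 +
              complex_of_real lam * (complex_of_real ((lam - 1) * E1\<^sup>2) +
                 complex_of_real (2 * lam) * (complex_of_real E1 - E2)) *
              complex_of_real (s2 ^ 4) * L2\<^sup>2))}
       \<and> norm b \<le> E1 / ((lam * s3 - 1) * s3 * norm L3)
           + min (E1\<^sup>2 / (lam\<^sup>2 * s2 ^ 4 * (norm L2)\<^sup>2))
                 (2 * (norm (E2 - E1) + E1) /
                    norm (complex_of_real (2 * (lam * s3 - 1) * s3) * L3 +
              complex_of_real (lam * (lam - 1) * s2 ^ 4) * L2\<^sup>2))"
proof -
  define Psi where "Psi = complex_of_real (2 * (lam * s3 - 1) * s3) * L3 +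
              complex_of_real (lam * (lam - 1) * s2 ^ 4) * L2\<^sup>2"
  define Ups where "Ups = complex_of_real (2 * (lam * s3 - 1) * s3 * E1\<^sup>2) * L3 +
              complex_of_real lam * (complex_of_real ((lam - 1) * E1\<^sup>2) +
                 complex_of_real (2 * lam) * (complex_of_real E1 - E2)) *
              complex_of_real (s2 ^ 4) * L2\<^sup>2"
  define A where "A = norm a"
  define N where "N = lam * s2^2"
  define K where "K = (lam * s3 - 1) * s3"
  have Npos: "N > 0" using lam s2 by (simp add: N_def)
  have m: "1 * s3 \<le> lam * s3" using lam s3 by (intro mult_right_mono) auto
  have "lam * s3 - 1 > 0" using m s3 by linarith
  hence Kpos: "K > 0" using s3 by (simp add: K_def)
  have E1c: "complex_of_real E1 \<noteq> 0" using E1 by simp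
  have v1u1: "v1 = - u1"
  proof -
    have "of_real E1 * v1 = of_real E1 * (- u1)" using h1 h3 by (simp add: algebra_simps)
    thus ?thesis using E1c by (simp only: mult_cancel_left) simp
  qed
  have nv1: "norm v1 = norm u1" by (simp add: v1u1)
  have b1: "N * norm L2 * A \<le> E1"
  proof -
    have "N * norm L2 * A = norm (of_real E1 * u1)"
      using arg_cong[OF h1, of norm] Npos lam s2 by (simp add: N_def A_def norm_mult norm_power)
    also have "\<dots> \<le> E1" using u E1 by (simp add: norm_mult mult_left_le)
    finally show ?thesis .
  qed
  have nL2: "norm L2 > 0" using L2 by simp
  have B1: "A \<le> E1 / (lam * norm L2 * s2 ^ 2)"
  proof -
    have pos: "lam * norm L2 * s2 ^ 2 > 0" using lam s2 nL2 by (intro mult_pos_pos) auto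
    show ?thesis using b1 pos by (simp add: N_def pos_le_divide_eq mult_ac)
  qed
  have sumid: "Psi * a^2 = of_real E1 * (u2 + v2) + 2 * E2 * u1^2"
  proof -
    have "Psi * a^2 = ((of_real lam * of_real s3 - 1) * of_real s3 * (L3 * b)
             + of_real lam * (of_real lam - 1) / 2 * of_real s2 ^ 4 * (L2 * a)^2)
           + ((of_real lam * of_real s3 - 1) * of_real s3 * (L3 * (2 * a^2 - b))
             + of_real lam * (of_real lam - 1) / 2 * of_real s2 ^ 4 * (L2 * - a)^2)"
      by (simp add: Psi_def field_simps power2_eq_square)
    also have "\<dots> = of_real E1 * (u2 + v2) + 2 * E2 * u1^2"
      unfolding h2 h4 v1u1 by (simp add: algebra_simps)
    finally show ?thesis .
  qed
  have Psib: "norm Psi * A^2 \<le> 2 * (norm (E2 - E1) + E1)"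
  proof -
    have e: "Psi * a^2 = (of_real E1 * u2 + E2 * u1^2) + (of_real E1 * v2 + E2 * v1^2)"
      unfolding sumid v1u1 by (simp add: algebra_simps)
    have "norm Psi * A^2 = norm ((of_real E1 * u2 + E2 * u1^2) + (of_real E1 * v2 + E2 * v1^2))"
      unfolding e[symmetric] by (simp add: A_def norm_mult norm_power)
    also have "\<dots> \<le> norm (of_real E1 * u2 + E2 * u1^2) + norm (of_real E1 * v2 + E2 * v1^2)"
      by (rule norm_triangle_ineq)
    also have "\<dots> \<le> 2 * (norm (E2 - E1) + E1)"
      using nb_aux[OF E1 u, of E2] nb_aux[OF E1 v, of E2] by simp
    finally show ?thesis .
  qed
  have nPsi: "norm Psi > 0" using Psi_nz by (simp add: Psi_def)
  have A2b: "A^2 \<le> 2 * (norm (E2 - E1) + E1) / norm Psi"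
    using Psib nPsi by (simp add: field_simps mult.commute)
  have B2: "A \<le> sqrt (2 * (norm (E2 - E1) + E1) / norm Psi)"
    using A2b by (simp add: A_def real_le_rsqrt)
  have upsid: "Ups * a^2 = of_real (E1^3) * (u2 + v2 + 2 * u1^2)"
  proof -
    have "Ups * a^2 = of_real (E1^2) * (Psi * a^2) + 2 * (of_real E1 - E2) * (of_real lam * (of_real s2)^2 * (L2 * a))^2"
      by (simp add: Ups_def Psi_def field_simps power2_eq_square eval_nat_numeral)
    also have "\<dots> = of_real (E1^3) * (u2 + v2 + 2 * u1^2)"
      unfolding sumid h1 by (simp add: field_simps power2_eq_square power3_eq_cube)
    finally show ?thesis .
  qed
  have Upsb: "norm Ups * A^2 \<le> 2 * E1^3"
  proof -
    have "norm Ups * A^2 = E1^3 * norm (u2 + v2 + 2 * u1^2)"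
      using arg_cong[OF upsid, of norm] E1 by (simp add: A_def norm_mult norm_power)
    also have "\<dots> \<le> E1^3 * 2"
    proof -
      have "norm (u2 + v2 + 2*u1^2) \<le> norm (u2+v2) + norm (2*u1^2)" by (rule norm_triangle_ineq)
      moreover have "norm (u2+v2) \<le> norm u2 + norm v2" by (rule norm_triangle_ineq)
      moreover have "norm (2*u1^2) = 2 * norm u1^2" by (simp add: norm_mult norm_power)
      ultimately have "norm (u2 + v2 + 2*u1^2) \<le> 2" using u v(2)[unfolded nv1] by linarith
      thus ?thesis using E1 by (intro mult_left_mono) auto
    qed
    finally show ?thesis by simp
  qed
  have nUps: "norm Ups > 0" using Ups_nz by (simp add: Ups_def)
  have B3: "A \<le> E1 * sqrt (2 * E1) / sqrt (norm Ups)"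
  proof -
    have "A^2 \<le> 2 * E1^3 / norm Ups" using Upsb nUps by (simp add: field_simps mult.commute)
    hence "A \<le> sqrt (2 * E1^3 / norm Ups)" by (simp add: A_def real_le_rsqrt)
    also have "sqrt (2 * E1^3 / norm Ups) = E1 * sqrt (2 * E1) / sqrt (norm Ups)"
      using E1 by (simp add: real_sqrt_divide real_sqrt_mult power3_eq_cube)
    finally show ?thesis .
  qed
  have diffid: "of_real (2 * K) * L3 * (b - a^2) = of_real E1 * (u2 - v2)"
  proof -
    have "of_real (2 * K) * L3 * (b - a^2) = ((of_real lam * of_real s3 - 1) * of_real s3 * (L3 * b)
             + of_real lam * (of_real lam - 1) / 2 * of_real s2 ^ 4 * (L2 * a)^2)
           - ((of_real lam * of_real s3 - 1) * of_real s3 * (L3 * (2 * a^2 - b))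
             + of_real lam * (of_real lam - 1) / 2 * of_real s2 ^ 4 * (L2 * - a)^2)"
      by (simp add: K_def field_simps power2_eq_square)
    also have "\<dots> = of_real E1 * (u2 - v2)"
      unfolding h2 h4 v1u1 by (simp add: algebra_simps)
    finally show ?thesis .
  qed
  have nL3: "norm L3 > 0" using L3 by simp
  have bd: "norm (b - a^2) \<le> E1 / (K * norm L3)"
  proof -
    have "2 * K * norm L3 * norm (b - a^2) = E1 * norm (u2 - v2)"
      using arg_cong[OF diffid, of norm] Kpos E1 by (simp add: norm_mult)
    also have "\<dots> \<le> E1 * 2"
    proof -
      have "norm u2 \<le> 1" using u(2) zero_le_power2[of "norm u1"] by linarith
      moreover have "norm v2 \<le> 1" using v(2) zero_le_power2[of "norm v1"] by linarith
      ultimately have "norm (u2 - v2) \<le> 2" using norm_triangle_ineq4[of u2 v2] by linarith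
      thus ?thesis using E1 by simp
    qed
    finally have "K * norm L3 * norm (b - a^2) \<le> E1" by simp
    thus ?thesis using Kpos nL3 by (simp add: field_simps mult.commute mult.left_commute)
  qed
  have A2b1: "A^2 \<le> E1\<^sup>2 / (lam\<^sup>2 * s2 ^ 4 * (norm L2)\<^sup>2)"
  proof -
    have "A^2 \<le> (E1 / (lam * norm L2 * s2 ^ 2))^2"
      using B1 by (simp add: A_def power_mono)
    moreover have "(lam * norm L2 * s2 ^ 2)^2 = lam\<^sup>2 * s2 ^ 4 * (norm L2)\<^sup>2"
      by (simp add: power_mult_distrib power_mult[symmetric] mult_ac)
    ultimately show ?thesis by (simp add: power_divide)
  qed
  have B4: "norm b \<le> E1 / ((lam * s3 - 1) * s3 * norm L3) + min (E1\<^sup>2 / (lam\<^sup>2 * s2 ^ 4 * (norm L2)\<^sup>2))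
                 (2 * (norm (E2 - E1) + E1) / norm Psi)"
  proof -
    have "norm b \<le> norm (b - a^2) + A^2"
      using norm_triangle_ineq[of "b - a^2" "a^2"] by (simp add: norm_power A_def)
    thus ?thesis using bd A2b1 A2b by (simp add: K_def)
  qed
  show ?thesis using B1 B2 B3 B4 by (simp add: A_def Psi_def Ups_def)
qed


lemma qbr_r_2: assumes "0 < q" "q < 1" shows "qbr_r q 2 = q + 1/q"
proof -
  have d: "q - 1/q \<noteq> 0" using assms mult_strict_mono[of q 1 q 1] by (simp add: field_simps)
  have "(q + 1/q) * (q - 1/q) = q^2 - 1/q^2" using assms by (simp add: field_simps power2_eq_square)
  thus ?thesis using assms d unfolding qbr_r_def
    by (simp add: powr_minus powr_numeral divide_eq_eq inverse_eq_divide)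
qed

lemma qbr_r_3: assumes "0 < q" "q < 1" shows "qbr_r q 3 = q^2 + 1 + 1/q^2"
proof -
  have d: "q - 1/q \<noteq> 0" using assms mult_strict_mono[of q 1 q 1] by (simp add: field_simps)
  have "(q^2 + 1 + 1/q^2) * (q - 1/q) = q^3 - 1/q^3" using assms by (simp add: field_simps power2_eq_square power3_eq_cube)
  thus ?thesis using assms d unfolding qbr_r_def
    by (simp add: powr_minus powr_numeral divide_eq_eq inverse_eq_divide)
qed

theorem corollary2:
  fixes q lam E1 :: real and eta E2 :: complex and phi f :: "complex \<Rightarrow> complex"
  assumes q: "0 < q" "q < 1"
    and eta: "Re eta > -1"
    and lam: "lam \<ge> 1"
    and phi_hol: "phi holomorphic_on ball 0 1"
    and phi_re: "\<forall>z\<in>ball 0 1. Re (phi z) > 0"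
    and phi0: "phi 0 = 1"
    and E1: "deriv phi 0 = of_real E1" "E1 > 0"
    and E2: "E2 = (deriv ^^ 2) phi 0 / 2"
    and Psi_nz: "2 * (lam * qbr_r q 3 - 1) * qbr_r q 3 * Lq q eta 3
                 + lam * (lam - 1) * qbr_r q 2 ^ 4 * (Lq q eta 2)\<^sup>2 \<noteq> 0"
    and Ups_nz: "2 * (lam * qbr_r q 3 - 1) * qbr_r q 3 * E1\<^sup>2 * Lq q eta 3
                 + lam * ((lam - 1) * E1\<^sup>2 + 2 * lam * (E1 - E2)) * qbr_r q 2 ^ 4 * (Lq q eta 2)\<^sup>2 \<noteq> 0"
    and f: "classC q eta lam phi f"
  shows "norm (tcoeff f 2) \<le> Min {E1 / (lam * norm (Lq q eta 2) * qbr_r q 2 ^ 2),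
            sqrt (2 * (norm (E2 - E1) + E1) /
              norm (2 * (lam * qbr_r q 3 - 1) * qbr_r q 3 * Lq q eta 3
                 + lam * (lam - 1) * qbr_r q 2 ^ 4 * (Lq q eta 2)\<^sup>2)),
            E1 * sqrt (2 * E1) /
              sqrt (norm (2 * (lam * qbr_r q 3 - 1) * qbr_r q 3 * E1\<^sup>2 * Lq q eta 3
                 + lam * ((lam - 1) * E1\<^sup>2 + 2 * lam * (E1 - E2)) * qbr_r q 2 ^ 4 * (Lq q eta 2)\<^sup>2))}
       \<and> norm (tcoeff f 3) \<le> E1 / ((lam * qbr_r q 3 - 1) * qbr_r q 3 * norm (Lq q eta 3))
           + min (E1\<^sup>2 / (lam\<^sup>2 * qbr_r q 2 ^ 4 * (norm (Lq q eta 2))\<^sup>2))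
                 (2 * (norm (E2 - E1) + E1) /
                    norm (2 * (lam * qbr_r q 3 - 1) * qbr_r q 3 * Lq q eta 3
                       + lam * (lam - 1) * qbr_r q 2 ^ 4 * (Lq q eta 2)\<^sup>2))"

proof -
  obtain g where bi: "bi_univalent_inv f g" and subF: "subord (Cexpr q lam (Jq q eta f)) phi"
      and subG: "subord (Cexpr q lam (Jq q eta g)) phi"
    using f unfolding classC_def by blast
  have holf: "f holomorphic_on ball 0 1" and holg: "g holomorphic_on ball 0 1"
    using bi unfolding bi_univalent_inv_def by auto
  define JF where "JF = Abs_fps (\<lambda>n. if n = 1 then 1 else if 2 \<le> n then Lq q eta n * tcoeff f n else 0)"
  define JG where "JG = Abs_fps (\<lambda>n. if n = 1 then 1 else if 2 \<le> n then Lq q eta n * tcoeff g n else 0)"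
  have eF: "Jq q eta f has_fps_expansion JF" unfolding JF_def by (rule J_exp[OF q eta holf])
  have eG: "Jq q eta g has_fps_expansion JG" unfolding JG_def by (rule J_exp[OF q eta holg])
  obtain u1 u2 where u: "norm u1 \<le> 1" "norm u2 \<le> 1 - norm u1 ^ 2"
    and hu1: "of_real lam * qc q 2 ^ 2 * JF $ 2 = of_real E1 * u1"
    and hu2: "(of_real lam * qc q 3 - 1) * qc q 3 * JF $ 3
             + of_real lam * (of_real lam - 1) / 2 * qc q 2 ^ 4 * (JF $ 2)^2 = of_real E1 * u2 + E2 * u1 ^ 2"
    using key[OF q eF _ _ subF phi_hol E1(1) E2] by (auto simp: JF_def)
  obtain v1 v2 where v: "norm v1 \<le> 1" "norm v2 \<le> 1 - norm v1 ^ 2"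
    and hv1: "of_real lam * qc q 2 ^ 2 * JG $ 2 = of_real E1 * v1"
    and hv2: "(of_real lam * qc q 3 - 1) * qc q 3 * JG $ 3
             + of_real lam * (of_real lam - 1) / 2 * qc q 2 ^ 4 * (JG $ 2)^2 = of_real E1 * v2 + E2 * v1 ^ 2"
    using key[OF q eG _ _ subG phi_hol E1(1) E2] by (auto simp: JG_def)
  have ic: "tcoeff g 2 = - tcoeff f 2 \<and> tcoeff g 3 = 2 * tcoeff f 2 ^ 2 - tcoeff f 3"
    by (rule inv_coeffs[OF bi])
  have q2: "qc q 2 = of_real (qbr_r q 2)" by (simp add: qc_def)
  have q3: "qc q 3 = of_real (qbr_r q 3)" by (simp add: qc_def)
  have s2: "qbr_r q 2 > 0" using q by (simp add: qbr_r_2 add_pos_pos)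
  have s3: "qbr_r q 3 > 1" using q by (simp add: qbr_r_3 add_pos_pos)
  have L2: "Lq q eta 2 \<noteq> 0" unfolding Lq_def using qbr_nz[OF q, of "1 + eta"] qbr_nz[OF q, of "2 + eta"] eta
    by simp
  have L3: "Lq q eta 3 \<noteq> 0" unfolding Lq_def using qbr_nz[OF q, of "1 + eta"] qbr_nz[OF q, of "3 + eta"] eta
    by simp
  have JF2: "JF $ 2 = Lq q eta 2 * tcoeff f 2" and JF3: "JF $ 3 = Lq q eta 3 * tcoeff f 3"
    by (simp_all add: JF_def)
  have JG2: "JG $ 2 = Lq q eta 2 * - tcoeff f 2" and JG3: "JG $ 3 = Lq q eta 3 * (2 * tcoeff f 2 ^ 2 - tcoeff f 3)"
    using ic by (simp_all add: JG_def)
  show ?thesis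
    by (rule alg_final[OF s2 s3 lam E1(2) L2 L3 Psi_nz Ups_nz u v])
       (use hu1 hu2 hv1 hv2 in \<open>simp_all only: q2 q3 JF2 JF3 JG2 JG3\<close>)
qed


end
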